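(* The $\mathbb{R}$-linear map $$\Theta:\mathbb{R}\otimes_{\mathbb{Z}}\mathcal{H}(\mathcal{Z}_{\mathbb{R}_+})\to\mathbb{R},\quad \begin{bmatrix} s_1,\dots,s_k\\ b_1,\dots,b_k\end{bmatrix}\mapsto f\begin{pmatrix} s_1,\dots,s_k\\ b_1,\dots,b_k\end{pmatrix},\quad 1\mapsto1,$$ is a homomorphism of $\mathbb{R}$-algebras, where the source carries the ($\mathbb{R}$-linear extension of the) product $\diamond$.
   Context: $f\begin{pmatrix} s_1,\dots,s_k\\ b_1,\dots,b_k\end{pmatrix}=\frac{1}{(b_1+\cdots+b_k)^{s_1}(b_2+\cdots+b_k)^{s_2}\cdots b_k^{s_k}}$ for positive integers $s_i$ and positive reals $b_i$. Let $\mathcal{Z}_{\mathbb{R}_+}=\{\begin{bmatrix} r\\ b\end{bmatrix}: r\in\mathbb{Z}_{\ge1}, b\in\mathbb{R}_+\}$, $M(\mathcal{Z}_{\mathbb{R}_+})$ the free monoid on these symbols with words written $\begin{bmatrix} s_1,\dots,s_k\\ b_1,\dots,b_k\end{bmatrix}$ (empty word $1$), $\mathcal{H}(\mathcal{Z}_{\mathbb{R}_+})=\mathbb{Z}M(\mathcal{Z}_{\mathbb{R}_+})$. Let $X=\{x_0\}\sqcup\{x_b:b\in\mathbb{R}_+\}$ and on $\mathbb{Z}M(X)$ let $ш$ be the shuffle product: $1шw=w=wш1$, $(aw')ш(bw'')=a(w'шbw'')+b(aw'шw'')$ for letters $a,b\in X$. Let $\rho$ be the linear bijection from $\mathbb{Z}\oplus\bigoplus_{b}\mathbb{Z}M(X)x_b$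 onto $\mathcal{H}(\mathcal{Z}_{\mathbb{R}_+})$ given by $x_0^{r_1-1}x_{b_1}\cdots x_0^{r_k-1}x_{b_k}\mapsto\begin{bmatrix} r_1,\dots,r_k\\ b_1,\dots,b_k\end{bmatrix}$, $1\mapsto1$, and define $\alpha\diamond\beta=\rho(\rho^{-1}(\alpha)ш\rho^{-1}(\beta))$. *)

theory Defs
  imports Main "HOL.Real"
begin

text \<open>Letters of X: None = x_0, Some b = x_b.\<close>
type_synonym xletter = "real option"
type_synonym xword = "xletter list"

text \<open>Words of the free monoid on Z_{R+}: lists of pairs (r, b).\<close>
type_synonym zword = "(nat \<times> real) list"

definition valid_zword :: "zword \<Rightarrow> bool" where
  "valid_zword w \<longleftrightarrow> (\<forall>(r, b) \<in> set w. r \<ge> 1 \<and> b > 0)"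

text \<open>Shuffle product on Z M(X), as the list of all shuffles with multiplicity.\<close>
fun shuf :: "xword \<Rightarrow> xword \<Rightarrow> xword list" where
  "shuf [] v = [v]"
| "shuf u [] = [u]"
| "shuf (a # u) (b # v) = map (Cons a) (shuf u (b # v)) @ map (Cons b) (shuf (a # u) v)"

text \<open>rho: x_0^{r1-1} x_{b1} ... x_0^{rk-1} x_{bk} \<mapsto> [r1..rk; b1..bk].\<close>
fun rho_aux :: "nat \<Rightarrow> xword \<Rightarrow> zword" where
  "rho_aux n [] = []"
| "rho_aux n (None # w) = rho_aux (Suc n) w"
| "rho_aux n (Some b # w) = (Suc n, b) # rho_aux 0 w"

definition rho :: "xword \<Rightarrow> zword" where
  "rho w = rho_aux 0 w"

fun rho_inv :: "zword \<Rightarrow> xword" where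
  "rho_inv [] = []"
| "rho_inv ((r, b) # w) = replicate (r - 1) None @ [Some b] @ rho_inv w"

text \<open>Elements of R \<otimes> H(Z_{R+}): finitely supported real-valued functions on words.\<close>
definition supp :: "(zword \<Rightarrow> real) \<Rightarrow> zword set" where
  "supp \<alpha> = {w. \<alpha> w \<noteq> 0}"

definition unit_elem :: "zword \<Rightarrow> real" where
  "unit_elem w = (if w = [] then 1 else 0)"

definition diamond :: "(zword \<Rightarrow> real) \<Rightarrow> (zword \<Rightarrow> real) \<Rightarrow> (zword \<Rightarrow> real)" where
  "diamond \<alpha> \<beta> w = (\<Sum>u\<in>supp \<alpha>. \<Sum>v\<in>supp \<beta>.
      \<alpha> u * \<beta> v * real (count_list (map rho (shuf (rho_inv u) (rho_inv v))) w))"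

text \<open>f(s_1..s_k; b_1..b_k) = 1 / ((b_1+...+b_k)^{s_1} ... b_k^{s_k}).\<close>
fun fval :: "zword \<Rightarrow> real" where
  "fval [] = 1"
| "fval ((s, b) # w) = fval w / (b + sum_list (map snd w)) ^ s"

definition Theta :: "(zword \<Rightarrow> real) \<Rightarrow> real" where
  "Theta \<alpha> = (\<Sum>w\<in>supp \<alpha>. \<alpha> w * fval w)"

end

theory Submission
  imports Defs
begin

definition cl :: "xletter \<Rightarrow> real" where "cl a = (case a of None \<Rightarrow> 0 | Some b \<Rightarrow> b)"
definition T :: "xword \<Rightarrow> real" where "T w = sum_list (map cl w)"

fun G :: "xword \<Rightarrow> real" where
  "G [] = 1"
| "G (a # w) = G w / (cl a + T w)"

definition Q :: "xword \<Rightarrow> bool" where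
  "Q w \<longleftrightarrow> (w = [] \<or> last w \<noteq> None) \<and> (\<forall>b. Some b \<in> set w \<longrightarrow> b > 0)"

lemma T_Cons[simp]: "T (a # w) = cl a + T w" by (simp add: T_def)
lemma T_Nil[simp]: "T [] = 0" by (simp add: T_def)
lemma T_app[simp]: "T (u @ v) = T u + T v" by (simp add: T_def)
lemma cl_simps[simp]: "cl None = 0" "cl (Some b) = b" by (auto simp: cl_def)

lemma shuf_len: "w \<in> set (shuf u v) \<Longrightarrow> length w = length u + length v"
  by (induction u v arbitrary: w rule: shuf.induct) auto

lemma shuf_T: "w \<in> set (shuf u v) \<Longrightarrow> T w = T u + T v"
  by (induction u v arbitrary: w rule: shuf.induct) auto

lemma Q_tl: "Q (a # u) \<Longrightarrow> Q u"
  unfolding Q_def by (cases u) auto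

lemma Q_pos: "Q w \<Longrightarrow> w \<noteq> [] \<Longrightarrow> T w > 0"
proof (induction w)
  case Nil then show ?case by simp
next
  case (Cons a w)
  have ca: "cl a \<ge> 0" using Cons.prems by (cases a) (auto simp: Q_def)
  show ?case
  proof (cases "w = []")
    case True
    then show ?thesis using Cons.prems by (cases a) (auto simp: Q_def)
  next
    case False
    then have "T w > 0" using Cons.IH Q_tl Cons.prems by blast
    then show ?thesis using ca by simp
  qed
qed

lemma sum_list_map_div: "sum_list (map (\<lambda>w. f w / (c::real)) xs) = sum_list (map f xs) / c"
  by (induction xs) (auto simp: add_divide_distrib)

lemma shuf_G: "Q u \<Longrightarrow> Q v \<Longrightarrow> sum_list (map G (shuf u v)) = G u * G v"
proof (induction u v rule: shuf.induct)
  case (1 v) then show ?case by simp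
next
  case (2 a u) then show ?case by simp
next
  case (3 a u b v)
  let ?X = "T (a # u) + T (b # v)"
  have qu: "Q u" and qv: "Q v" using 3 Q_tl by blast+
  have pu: "T (a#u) > 0" and pv: "T (b#v) > 0" using Q_pos 3 by blast+
  have e1: "map G (map (Cons a) (shuf u (b # v))) = map (\<lambda>w. G w / ?X) (shuf u (b # v))"
    by (auto dest: shuf_T simp: add.assoc)
  have e2: "map G (map (Cons b) (shuf (a # u) v)) = map (\<lambda>w. G w / ?X) (shuf (a # u) v)"
    by (auto dest: shuf_T simp: algebra_simps)
  have gu: "G u = G (a#u) * T (a#u)" using pu by simp
  have gv: "G v = G (b#v) * T (b#v)" using pv by simp
  have "sum_list (map G (shuf (a # u) (b # v)))
      = (G u * G (b#v) + G (a#u) * G v) / ?X"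
  proof -
    have "sum_list (map G (shuf (a # u) (b # v))) =
       sum_list (map G (map (Cons a) (shuf u (b # v)))) + sum_list (map G (map (Cons b) (shuf (a # u) v)))"
      by simp
    also have "\<dots> = (sum_list (map G (shuf u (b # v))) + sum_list (map G (shuf (a # u) v))) / ?X"
      by (simp only: e1 e2 sum_list_map_div add_divide_distrib)
    moreover have "sum_list (map G (shuf u (b # v))) = G u * G (b # v)" using 3(1) qu 3(4) by blast
    moreover have "sum_list (map G (shuf (a # u) v)) = G (a # u) * G v" using 3(2) qv 3(3) by blast
    ultimately show ?thesis by (simp del: G.simps)
  qed
  also have "\<dots> = G (a#u) * G (b#v) * ?X / ?X" unfolding gu gv by (simp del: G.simps add: algebra_simps)
  also have "\<dots> = G (a#u) * G (b#v)" using pu pv by simp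
  finally show ?case .
qed

lemma Q_shuf: "w \<in> set (shuf u v) \<Longrightarrow> Q u \<Longrightarrow> Q v \<Longrightarrow> Q w"
proof (induction u v arbitrary: w rule: shuf.induct)
  case (1 v) then show ?case by simp
next
  case (2 a u) then show ?case by simp
next
  case (3 a u b v)
  from 3(3) consider w' where "w = a # w'" "w' \<in> set (shuf u (b # v))"
    | w' where "w = b # w'" "w' \<in> set (shuf (a # u) v)" by auto
  then show ?case
  proof cases
    case 1
    have "Q w'" using 3 1 Q_tl by blast
    moreover have "w' \<noteq> []" using shuf_len[OF 1(2)] by auto
    moreover have "a \<noteq> None \<longrightarrow> (\<forall>c. a = Some c \<longrightarrow> c > 0)" using 3(4) by (auto simp: Q_def)
    ultimately show ?thesis using 1 3(4) by (auto simp: Q_def)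
  next
    case 2
    have "Q w'" using 3 2 Q_tl by blast
    moreover have "w' \<noteq> []" using shuf_len[OF 2(2)] by auto
    moreover have "\<forall>c. b = Some c \<longrightarrow> c > 0" using 3(5) by (auto simp: Q_def)
    ultimately show ?thesis using 2 by (auto simp: Q_def)
  qed
qed

lemma T_rep[simp]: "T (replicate n None) = 0"
  by (induction n) auto

lemma G_rep: "G (replicate n None @ v) = G v / (T v) ^ n"
  by (induction n) (auto simp: field_simps)

lemma sum_rho_aux: "sum_list (map snd (rho_aux n w)) = T w"
  by (induction n w rule: rho_aux.induct) auto

lemma fval_rho_aux: "(w = [] \<or> last w \<noteq> None) \<Longrightarrow> (w = [] \<longrightarrow> n = 0) \<Longrightarrow>
   fval (rho_aux n w) = G (replicate n None @ w)"
proof (induction n w rule: rho_aux.induct)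
  case (1 n) then show ?case by simp
next
  case (2 n w)
  then have "w \<noteq> []" by auto
  then have "fval (rho_aux (Suc n) w) = G (replicate (Suc n) None @ w)"
    using 2 by auto
  then show ?case by (simp add: replicate_app_Cons_same)
next
  case (3 n b w)
  have "w = [] \<or> last w \<noteq> None" using 3(2) by auto
  then have "fval (rho_aux 0 w) = G w" using 3 by auto
  then show ?case
    by (simp add: G_rep sum_rho_aux field_simps)
qed

lemma fval_rho: "w = [] \<or> last w \<noteq> None \<Longrightarrow> fval (rho w) = G w"
  unfolding rho_def using fval_rho_aux[of w 0] by simp

lemma rho_aux_rep: "rho_aux n (replicate m None @ w) = rho_aux (n + m) w"
  by (induction m arbitrary: n) auto

lemma rho_rho_inv: "valid_zword z \<Longrightarrow> rho (rho_inv z) = z"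
proof (induction z)
  case Nil then show ?case by (simp add: rho_def)
next
  case (Cons p z)
  obtain r b where p: "p = (r, b)" by (cases p)
  have r: "r \<ge> 1" and vz: "valid_zword z" using Cons.prems p by (auto simp: valid_zword_def)
  show ?case using Cons.IH[OF vz] r p by (simp add: rho_def rho_aux_rep)
qed

lemma Q_rho_inv: "valid_zword z \<Longrightarrow> Q (rho_inv z)"
proof (induction z)
  case Nil then show ?case by (simp add: Q_def)
next
  case (Cons p z)
  obtain r b where p: "p = (r, b)" by (cases p)
  have b: "b > 0" and vz: "valid_zword z" using Cons.prems p by (auto simp: valid_zword_def)
  have "Q (rho_inv z)" using Cons.IH vz by blast
  then show ?case using p b by (auto simp: Q_def)
qed

lemma theta_superset: "finite S \<Longrightarrow> supp \<alpha> \<subseteq> S \<Longrightarrow> Theta \<alpha> = (\<Sum>w\<in>S. \<alpha> w * fval w)"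
  unfolding Theta_def
  by (rule sum.mono_neutral_left) (auto simp: supp_def)

lemma count_sum: "finite S \<Longrightarrow> set xs \<subseteq> S \<Longrightarrow>
  (\<Sum>w\<in>S. real (count_list xs w) * f w) = sum_list (map f xs)"
proof (induction xs)
  case Nil then show ?case by simp
next
  case (Cons x xs)
  have "(\<Sum>w\<in>S. real (count_list (x # xs) w) * f w)
     = (\<Sum>w\<in>S. (if x = w then f w else 0)) + (\<Sum>w\<in>S. real (count_list xs w) * f w)"
    by (auto simp: sum.distrib[symmetric] algebra_simps intro!: sum.cong)
  also have "(\<Sum>w\<in>S. (if x = w then f w else 0)) = f x" using Cons.prems
    by (simp add: sum.delta)
  finally show ?case using Cons by simp
qed

theorem corollary2p5:
  shows "Theta unit_elem = 1 \<and>
    (\<forall>\<alpha> \<beta>. finite (supp \<alpha>) \<and> finite (supp \<beta>) \<and>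
           (\<forall>w\<in>supp \<alpha>. valid_zword w) \<and> (\<forall>w\<in>supp \<beta>. valid_zword w) \<longrightarrow>
           Theta (diamond \<alpha> \<beta>) = Theta \<alpha> * Theta \<beta>) \<and>
    (\<forall>\<alpha> \<beta>. finite (supp \<alpha>) \<and> finite (supp \<beta>) \<longrightarrow>
           Theta (\<lambda>w. \<alpha> w + \<beta> w) = Theta \<alpha> + Theta \<beta>) \<and>
    (\<forall>\<alpha> c. finite (supp \<alpha>) \<longrightarrow> Theta (\<lambda>w. c * \<alpha> w) = c * Theta \<alpha>)"
proof (intro conjI allI impI)
  have "supp unit_elem = {[]}" by (auto simp: supp_def unit_elem_def)
  then show "Theta unit_elem = 1" by (simp add: Theta_def unit_elem_def)
next
  fix \<alpha> \<beta> :: "zword \<Rightarrow> real"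
  assume "finite (supp \<alpha>) \<and> finite (supp \<beta>)"
  then have fa: "finite (supp \<alpha>)" and fb: "finite (supp \<beta>)" by auto
  let ?S = "supp \<alpha> \<union> supp \<beta>"
  have "Theta (\<lambda>w. \<alpha> w + \<beta> w) = (\<Sum>w\<in>?S. (\<alpha> w + \<beta> w) * fval w)"
    by (rule theta_superset) (use fa fb in \<open>auto simp: supp_def\<close>)
  also have "\<dots> = (\<Sum>w\<in>?S. \<alpha> w * fval w) + (\<Sum>w\<in>?S. \<beta> w * fval w)"
    by (simp add: sum.distrib algebra_simps)
  also have "\<dots> = Theta \<alpha> + Theta \<beta>"
    using theta_superset[of ?S \<alpha>] theta_superset[of ?S \<beta>] fa fb by auto
  finally show "Theta (\<lambda>w. \<alpha> w + \<beta> w) = Theta \<alpha> + Theta \<beta>" .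
next
  fix \<alpha> :: "zword \<Rightarrow> real" and c :: real
  assume fa: "finite (supp \<alpha>)"
  have "Theta (\<lambda>w. c * \<alpha> w) = (\<Sum>w\<in>supp \<alpha>. (c * \<alpha> w) * fval w)"
    by (rule theta_superset) (use fa in \<open>auto simp: supp_def\<close>)
  also have "\<dots> = c * Theta \<alpha>" by (simp add: Theta_def sum_distrib_left algebra_simps)
  finally show "Theta (\<lambda>w. c * \<alpha> w) = c * Theta \<alpha>" .
next
  fix \<alpha> \<beta> :: "zword \<Rightarrow> real"
  assume H: "finite (supp \<alpha>) \<and> finite (supp \<beta>) \<and>
           (\<forall>w\<in>supp \<alpha>. valid_zword w) \<and> (\<forall>w\<in>supp \<beta>. valid_zword w)"
  then have fa: "finite (supp \<alpha>)" and fb: "finite (supp \<beta>)"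
    and va: "\<forall>w\<in>supp \<alpha>. valid_zword w" and vb: "\<forall>w\<in>supp \<beta>. valid_zword w" by auto
  define L where "L u v = map rho (shuf (rho_inv u) (rho_inv v))" for u v
  define S where "S = (\<Union>u\<in>supp \<alpha>. \<Union>v\<in>supp \<beta>. set (L u v))"
  have fS: "finite S" unfolding S_def using fa fb by auto
  have dS: "supp (diamond \<alpha> \<beta>) \<subseteq> S"
  proof
    fix w assume "w \<in> supp (diamond \<alpha> \<beta>)"
    then have "diamond \<alpha> \<beta> w \<noteq> 0" by (simp add: supp_def)
    then obtain u v where "u \<in> supp \<alpha>" "v \<in> supp \<beta>" "count_list (L u v) w \<noteq> 0"
      unfolding diamond_def L_def by (metis (no_types, lifting) mult_zero_right of_nat_0 sum.neutral)
    then show "w \<in> S" unfolding S_def by (auto simp: count_list_0_iff)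
  qed
  have "Theta (diamond \<alpha> \<beta>) = (\<Sum>w\<in>S. diamond \<alpha> \<beta> w * fval w)"
    by (rule theta_superset[OF fS dS])
  also have "\<dots> = (\<Sum>u\<in>supp \<alpha>. \<Sum>v\<in>supp \<beta>. \<alpha> u * \<beta> v *
        (\<Sum>w\<in>S. real (count_list (L u v) w) * fval w))"
    unfolding diamond_def L_def
    by (simp add: sum_distrib_right sum_distrib_left mult.assoc sum.swap[of _ S])
  also have "\<dots> = (\<Sum>u\<in>supp \<alpha>. \<Sum>v\<in>supp \<beta>. \<alpha> u * \<beta> v * (fval u * fval v))"
  proof (intro sum.cong refl)
    fix u v assume u: "u \<in> supp \<alpha>" and v: "v \<in> supp \<beta>"
    have qu: "Q (rho_inv u)" and qv: "Q (rho_inv v)" using u v va vb Q_rho_inv by auto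
    have "set (L u v) \<subseteq> S" unfolding S_def using u v by auto
    then have "(\<Sum>w\<in>S. real (count_list (L u v) w) * fval w) = sum_list (map fval (L u v))"
      using count_sum fS by blast
    also have "\<dots> = sum_list (map G (shuf (rho_inv u) (rho_inv v)))"
      unfolding L_def map_map
    proof (intro arg_cong[where f=sum_list] map_cong refl)
      fix x assume "x \<in> set (shuf (rho_inv u) (rho_inv v))"
      then have "Q x" using Q_shuf qu qv by blast
      then show "(fval \<circ> rho) x = G x" using fval_rho by (simp add: Q_def)
    qed
    also have "\<dots> = G (rho_inv u) * G (rho_inv v)" using shuf_G qu qv by blast
    also have "\<dots> = fval u * fval v"
      using fval_rho[of "rho_inv u"] fval_rho[of "rho_inv v"] qu qv u v va vb
      by (simp add: Q_def rho_rho_inv)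
    finally show "\<alpha> u * \<beta> v * (\<Sum>w\<in>S. real (count_list (L u v) w) * fval w)
       = \<alpha> u * \<beta> v * (fval u * fval v)" by simp
  qed
  also have "\<dots> = Theta \<alpha> * Theta \<beta>"
    by (simp add: Theta_def sum_product algebra_simps)
  finally show "Theta (diamond \<alpha> \<beta>) = Theta \<alpha> * Theta \<beta>" .
qed

end
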